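(* Let $G$ be a finite simple graph and let $\mathcal{V}$ be a maximum-cardinality collection of pairwise edge-disjoint triangles of $G$. In the lend relation, every type-$1$ triangle $\psi^1\in\mathcal{V}$ is related to at most one $\psi\in\mathcal{V}$.
   Context: Triangles are sets of three pairwise adjacent vertices, identified with their edge sets. A triangle $t\notin\mathcal{V}$ is singly-attached to $\psi\in\mathcal{V}$ if $\psi$ is the only triangle of $\mathcal{V}$ sharing an edge with $t$; the shared edge is a base-edge and the vertex of $V(t)\setminus V(\psi)$ is its anchoring vertex. For $\psi\in\mathcal{V}$, $base(\psi)$ is the set of edges of $\psi$ that are base-edges of triangles singly-attached to $\psi$; $\psi$ has type $i$ if $|base(\psi)|=i$. A triangle $t\notin\mathcal{V}$ is doubly-attached to $\psi,\psi'\in\mathcal{V}$ if these are exactly the triangles of $\mathcal{V}$ sharing an edge with $t$. For a type-$1$ triangle $\psi^1$ with exactly one singly-attached triangle, $anchor(\psi^1)$ denotes that triangle's anchoring vertex. Lend relation: $(\psi^1,\psi)$ with $\psi^1$ of type $1$ and $\psi$ of type $1$ or $3$ is in the lend relation if exactly one triangle is singly-attached to $\psi^1$ and there exist two triangles $t_1,t_2$ both doubly-attached to $\psi^1$ and $\psi$ such that $V(t_1)\cup V(t_2)=V(\psi^1)\cup\{anchor(\psi^1)\}$ and this set induces a $K_4$. *)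

theory Defs
  imports Main
begin

definition simple_graph :: "'a set \<Rightarrow> 'a set set \<Rightarrow> bool" where
  "simple_graph V E \<longleftrightarrow> finite V \<and> (\<forall>e\<in>E. e \<subseteq> V \<and> card e = 2)"

definition triangle :: "'a set set \<Rightarrow> 'a set \<Rightarrow> bool" where
  "triangle E T \<longleftrightarrow> card T = 3 \<and> (\<forall>u\<in>T. \<forall>v\<in>T. u \<noteq> v \<longrightarrow> {u, v} \<in> E)"

text \<open>Edge set of a triangle (triangles are identified with their edge sets).\<close>
definition tri_edges :: "'a set \<Rightarrow> 'a set set" where
  "tri_edges T = {e. e \<subseteq> T \<and> card e = 2}"

definition shares_edge :: "'a set \<Rightarrow> 'a set \<Rightarrow> bool" where
  "shares_edge t s \<longleftrightarrow> tri_edges t \<inter> tri_edges s \<noteq> {}"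

definition tri_packing :: "'a set set \<Rightarrow> 'a set set \<Rightarrow> bool" where
  "tri_packing E \<V> \<longleftrightarrow> (\<forall>T\<in>\<V>. triangle E T) \<and>
     (\<forall>T\<in>\<V>. \<forall>S\<in>\<V>. T \<noteq> S \<longrightarrow> tri_edges T \<inter> tri_edges S = {})"

definition max_tri_packing :: "'a set set \<Rightarrow> 'a set set \<Rightarrow> bool" where
  "max_tri_packing E \<V> \<longleftrightarrow> tri_packing E \<V> \<and> finite \<V> \<and>
     (\<forall>\<W>. tri_packing E \<W> \<longrightarrow> card \<W> \<le> card \<V>)"

definition singly_attached :: "'a set set \<Rightarrow> 'a set set \<Rightarrow> 'a set \<Rightarrow> 'a set \<Rightarrow> bool" where
  "singly_attached E \<V> t \<psi> \<longleftrightarrow> triangle E t \<and> t \<notin> \<V> \<and> \<psi> \<in> \<V> \<and>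
     {\<phi>\<in>\<V>. shares_edge t \<phi>} = {\<psi>}"

definition base :: "'a set set \<Rightarrow> 'a set set \<Rightarrow> 'a set \<Rightarrow> 'a set set" where
  "base E \<V> \<psi> = {e. \<exists>t. singly_attached E \<V> t \<psi> \<and> e \<in> tri_edges t \<inter> tri_edges \<psi>}"

definition has_type :: "'a set set \<Rightarrow> 'a set set \<Rightarrow> 'a set \<Rightarrow> nat \<Rightarrow> bool" where
  "has_type E \<V> \<psi> i \<longleftrightarrow> \<psi> \<in> \<V> \<and> card (base E \<V> \<psi>) = i"

definition doubly_attached :: "'a set set \<Rightarrow> 'a set set \<Rightarrow> 'a set \<Rightarrow> 'a set \<Rightarrow> 'a set \<Rightarrow> bool" where
  "doubly_attached E \<V> t \<psi> \<psi>' \<longleftrightarrow> triangle E t \<and> t \<notin> \<V> \<and> \<psi> \<in> \<V> \<and> \<psi>' \<in> \<V> \<and> \<psi> \<noteq> \<psi>' \<and>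
     {\<phi>\<in>\<V>. shares_edge t \<phi>} = {\<psi>, \<psi>'}"

definition anchor :: "'a set set \<Rightarrow> 'a set set \<Rightarrow> 'a set \<Rightarrow> 'a" where
  "anchor E \<V> \<psi> = (THE x. \<exists>t. singly_attached E \<V> t \<psi> \<and> t - \<psi> = {x})"

definition lend :: "'a set set \<Rightarrow> 'a set set \<Rightarrow> 'a set \<Rightarrow> 'a set \<Rightarrow> bool" where
  "lend E \<V> \<psi>1 \<psi> \<longleftrightarrow>
     has_type E \<V> \<psi>1 1 \<and> (has_type E \<V> \<psi> 1 \<or> has_type E \<V> \<psi> 3) \<and>
     (\<exists>!t. singly_attached E \<V> t \<psi>1) \<and>
     (\<exists>t1 t2. t1 \<noteq> t2 \<and> doubly_attached E \<V> t1 \<psi>1 \<psi> \<and> doubly_attached E \<V> t2 \<psi>1 \<psi> \<and>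
        t1 \<union> t2 = \<psi>1 \<union> {anchor E \<V> \<psi>1} \<and>
        card (t1 \<union> t2) = 4 \<and>
        (\<forall>u\<in>t1 \<union> t2. \<forall>v\<in>t1 \<union> t2. u \<noteq> v \<longrightarrow> {u, v} \<in> E))"

end

theory Submission
  imports Defs
begin

lemma compl_elem:
  assumes "finite S" "card S = 4" "t \<subseteq> S" "card t = 3"
  shows "\<exists>y\<in>S. t = S - {y}"
proof -
  have "card (S - t) = 1" using assms by (simp add: card_Diff_subset finite_subset)
  then obtain y where y: "S - t = {y}" by (auto simp: card_Suc_eq)
  then have "t = S - {y}" using assms(3) by blast
  moreover have "y \<in> S" using y by blast
  ultimately show ?thesis by blast
qed

lemma pick:
  assumes "finite S" "card S = 4" "P \<subseteq> S" "card P = 3"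
    and "t1 \<subseteq> S" "card t1 = 3" "t1 \<noteq> P"
    and "t2 \<subseteq> S" "card t2 = 3" "t2 \<noteq> P"
    and "t3 \<subseteq> S" "card t3 = 3" "t3 \<noteq> P"
    and "t4 \<subseteq> S" "card t4 = 3" "t4 \<noteq> P"
    and "t1 \<noteq> t2" "t3 \<noteq> t4"
  shows "t1 = t3 \<or> t1 = t4 \<or> t2 = t3 \<or> t2 = t4"
proof (rule ccontr)
  assume H: "\<not> ?thesis"
  obtain p where p: "p \<in> S" "P = S - {p}" using compl_elem assms by blast
  obtain y1 where y1: "y1 \<in> S" "t1 = S - {y1}" using compl_elem assms by blast
  obtain y2 where y2: "y2 \<in> S" "t2 = S - {y2}" using compl_elem assms by blast
  obtain y3 where y3: "y3 \<in> S" "t3 = S - {y3}" using compl_elem assms by blast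
  obtain y4 where y4: "y4 \<in> S" "t4 = S - {y4}" using compl_elem assms by blast
  have ne: "y1 \<noteq> p" "y2 \<noteq> p" "y3 \<noteq> p" "y4 \<noteq> p" "y1 \<noteq> y2" "y3 \<noteq> y4"
    "y1 \<noteq> y3" "y1 \<noteq> y4" "y2 \<noteq> y3" "y2 \<noteq> y4"
    using assms H p y1 y2 y3 y4 by auto
  have sub: "{p, y1, y2, y3, y4} \<subseteq> S" using p y1 y2 y3 y4 by auto
  have "card {p, y1, y2, y3, y4} = 5" using ne by auto
  then have "card S \<ge> 5" using card_mono[OF assms(1) sub] by simp
  then show False using assms(2) by simp
qed

theorem lemma18:
  fixes V :: "'a set" and E :: "'a set set" and \<V> :: "'a set set"
  assumes "simple_graph V E"
    and "max_tri_packing E \<V>"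
    and "\<psi>1 \<in> \<V>" and "has_type E \<V> \<psi>1 1"
    and "\<psi> \<in> \<V>" and "\<psi>' \<in> \<V>"
    and "lend E \<V> \<psi>1 \<psi>" and "lend E \<V> \<psi>1 \<psi>'"
  shows "\<psi> = \<psi>'"
proof -
  define S where "S = \<psi>1 \<union> {anchor E \<V> \<psi>1}"
  obtain t1 t2 where A: "t1 \<noteq> t2" "doubly_attached E \<V> t1 \<psi>1 \<psi>" "doubly_attached E \<V> t2 \<psi>1 \<psi>"
    "t1 \<union> t2 = S" "card (t1 \<union> t2) = 4"
    using assms(7) unfolding lend_def S_def by blast
  obtain t3 t4 where B: "t3 \<noteq> t4" "doubly_attached E \<V> t3 \<psi>1 \<psi>'" "doubly_attached E \<V> t4 \<psi>1 \<psi>'"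
    "t3 \<union> t4 = S"
    using assms(8) unfolding lend_def S_def by blast
  have cS: "card S = 4" using A by simp
  have fS: "finite S" using cS by (metis card.infinite zero_neq_numeral)
  have cP: "card \<psi>1 = 3" using assms(2,3) unfolding max_tri_packing_def tri_packing_def triangle_def by blast
  have PS: "\<psi>1 \<subseteq> S" unfolding S_def by blast
  have tri: "t \<subseteq> S \<and> card t = 3 \<and> t \<noteq> \<psi>1"
    if "doubly_attached E \<V> t \<psi>1 \<phi>" "t \<union> t' = S" for t t' \<phi>
  proof -
    have "t \<subseteq> S" using that(2) by blast
    moreover have "card t = 3" "t \<notin> \<V>" using that(1) unfolding doubly_attached_def triangle_def by auto
    ultimately show ?thesis using assms(3) by auto
  qed
  have "t1 = t3 \<or> t1 = t4 \<or> t2 = t3 \<or> t2 = t4"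
  proof -
    have "t1 \<union> t2 = S" "t2 \<union> t1 = S" "t3 \<union> t4 = S" "t4 \<union> t3 = S" using A B by auto
    then have h1: "t1 \<subseteq> S \<and> card t1 = 3 \<and> t1 \<noteq> \<psi>1"
      and h2: "t2 \<subseteq> S \<and> card t2 = 3 \<and> t2 \<noteq> \<psi>1"
      and h3: "t3 \<subseteq> S \<and> card t3 = 3 \<and> t3 \<noteq> \<psi>1"
      and h4: "t4 \<subseteq> S \<and> card t4 = 3 \<and> t4 \<noteq> \<psi>1"
      using tri A(2,3) B(2,3) by metis+
    show ?thesis using pick[OF fS cS PS cP] h1 h2 h3 h4 A(1) B(1) by simp
  qed
  then obtain t where "doubly_attached E \<V> t \<psi>1 \<psi>" "doubly_attached E \<V> t \<psi>1 \<psi>'"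
    using A B by blast
  then show ?thesis unfolding doubly_attached_def by (metis doubleton_eq_iff)
qed

end
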